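(* Let $\sigma_e>0$, $\beta=(\beta_2,\beta_1)^T\in\mathbb{R}^2$. For every integer $n>2$ let $x_1,\dots,x_n\in\mathbb{R}$ be deterministic (possibly depending on $n$), $X_n$ the $n\times2$ matrix with rows $(1,x_i)$, $Y_n=(y_1,\dots,y_n)^T\sim\mathcal{N}(X_n\beta,\sigma_e^2I_{n\times n})$, and let $\Delta_n>0$, $\rho_n>0$ be sequences. Assume: (1) $\bar x\to c_x$, $\overline{x^2}\to c_{x^2}$ with $c_{x^2}>c_x^2$; (2) $\eta_n^2\to\eta^2$ for some $\eta\in\mathbb{R}$, where $\eta_n^2=\|X_n\beta-X_n\beta^N\|^2/\sigma_e^2$, $\beta^N=(\beta_2+\beta_1\bar x,0)^T$; (3) $\Delta_n^2/(\rho_nn)\to0$, $\Delta_n^4/(\rho_nn)\to0$; (4) $\mathbb{P}[\exists i,\ y_i\notin[-\Delta_n,\Delta_n]]\to0$ and $x_i\in[-\Delta_n,\Delta_n]$ for all $i$. Then $\sqrt n(\tilde\beta^N-\hat\beta^N)\xrightarrow{P}0$ and $\sqrt n(\tilde\beta-\hat\beta)\xrightarrow{P}0$.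
   Context: $\bar x=\frac1n\sum x_i$, $\overline{x^2}=\frac1n\sum x_i^2$, $\bar y=\frac1n\sum y_i$, $\overline{xy}=\frac1n\sum x_iy_i$. Non-private estimates: $\hat\beta_1=\frac{\overline{xy}-\bar x\bar y}{\overline{x^2}-\bar x^2}$, $\hat\beta_2=\bar y-\hat\beta_1\bar x$, $\hat\beta=(\hat\beta_2,\hat\beta_1)^T$, $\hat\beta^N=(\bar y,0)^T$. $[z]_a^b$ is $z$ clipped to $[a,b]$. With $\Delta=\Delta_n$, $\rho'=\rho_n/5$ and independent Gaussian noises: $\tilde{\bar x}=\frac1n\sum_i[x_i]_{-\Delta}^{\Delta}+\mathcal{N}(0,\frac{2\Delta^2}{\rho'n^2})$, $\tilde{\bar y}=\frac1n\sum_i[y_i]_{-\Delta}^{\Delta}+\mathcal{N}(0,\frac{2\Delta^2}{\rho'n^2})$, $\widetilde{\overline{x^2}}=\frac1n\sum_i[x_i^2]_0^{\Delta^2}+\mathcal{N}(0,\frac{\Delta^4}{2\rho'n^2})$, $\widetilde{\overline{xy}}=\frac1n\sum_i[x_iy_i]_{-\Delta^2}^{\Delta^2}+\mathcal{N}(0,\frac{2\Delta^4}{\rho'n^2})$; $\tilde\beta_1=\frac{\widetilde{\overline{xy}}-\tilde{\bar x}\tilde{\bar y}}{\widetilde{\overline{x^2}}-\tilde{\bar x}^2}$, $\tilde\beta_2=\frac{\tilde{\bar y}\widetilde{\overline{x^2}}-\tilde{\bar x}\widetilde{\overline{xy}}}{\widetilde{\overline{x^2}}-\tilde{\bar x}^2}$,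 $\tilde\beta=(\tilde\beta_2,\tilde\beta_1)^T$, $\tilde\beta^N=(\tilde{\bar y},0)^T$. Convergence is as $n\to\infty$. *)

theory Defs
  imports "HOL-Probability.Probability"
begin

definition clip :: "real \<Rightarrow> real \<Rightarrow> real \<Rightarrow> real" where
  "clip a b z = max a (min b z)"

definition avg :: "nat \<Rightarrow> (nat \<Rightarrow> real) \<Rightarrow> real" where
  "avg n f = (\<Sum>i<n. f i) / real n"

text \<open>Non-private OLS estimates; vectors written as pairs (intercept, slope).\<close>
definition hat_beta1 :: "nat \<Rightarrow> (nat \<Rightarrow> real) \<Rightarrow> (nat \<Rightarrow> real) \<Rightarrow> real" where
  "hat_beta1 n xs ys =
     (avg n (\<lambda>i. xs i * ys i) - avg n xs * avg n ys) / (avg n (\<lambda>i. (xs i)\<^sup>2) - (avg n xs)\<^sup>2)"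

definition hat_beta :: "nat \<Rightarrow> (nat \<Rightarrow> real) \<Rightarrow> (nat \<Rightarrow> real) \<Rightarrow> real \<times> real" where
  "hat_beta n xs ys = (avg n ys - hat_beta1 n xs ys * avg n xs, hat_beta1 n xs ys)"

definition hat_betaN :: "nat \<Rightarrow> (nat \<Rightarrow> real) \<Rightarrow> real \<times> real" where
  "hat_betaN n ys = (avg n ys, 0)"

text \<open>Private sufficient statistics. z 0, z 1, z 2, z 3 are independent standard normal
  draws; a N(0,v) noise is realised as sqrt v * z k. rho' = rho / 5.\<close>
definition t_xbar :: "nat \<Rightarrow> real \<Rightarrow> real \<Rightarrow> (nat \<Rightarrow> real) \<Rightarrow> (nat \<Rightarrow> real) \<Rightarrow> real" where
  "t_xbar n D rho xs z = avg n (\<lambda>i. clip (-D) D (xs i))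
      + sqrt (2 * D\<^sup>2 / ((rho / 5) * (real n)\<^sup>2)) * z 0"

definition t_ybar :: "nat \<Rightarrow> real \<Rightarrow> real \<Rightarrow> (nat \<Rightarrow> real) \<Rightarrow> (nat \<Rightarrow> real) \<Rightarrow> real" where
  "t_ybar n D rho ys z = avg n (\<lambda>i. clip (-D) D (ys i))
      + sqrt (2 * D\<^sup>2 / ((rho / 5) * (real n)\<^sup>2)) * z 1"

definition t_x2bar :: "nat \<Rightarrow> real \<Rightarrow> real \<Rightarrow> (nat \<Rightarrow> real) \<Rightarrow> (nat \<Rightarrow> real) \<Rightarrow> real" where
  "t_x2bar n D rho xs z = avg n (\<lambda>i. clip 0 (D\<^sup>2) ((xs i)\<^sup>2))
      + sqrt (D ^ 4 / (2 * (rho / 5) * (real n)\<^sup>2)) * z 2"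

definition t_xybar :: "nat \<Rightarrow> real \<Rightarrow> real \<Rightarrow> (nat \<Rightarrow> real) \<Rightarrow> (nat \<Rightarrow> real) \<Rightarrow> (nat \<Rightarrow> real) \<Rightarrow> real" where
  "t_xybar n D rho xs ys z = avg n (\<lambda>i. clip (-(D\<^sup>2)) (D\<^sup>2) (xs i * ys i))
      + sqrt (2 * D ^ 4 / ((rho / 5) * (real n)\<^sup>2)) * z 3"

definition tilde_beta :: "nat \<Rightarrow> real \<Rightarrow> real \<Rightarrow> (nat \<Rightarrow> real) \<Rightarrow> (nat \<Rightarrow> real) \<Rightarrow> (nat \<Rightarrow> real) \<Rightarrow> real \<times> real" where
  "tilde_beta n D rho xs ys z =
    (let tx = t_xbar n D rho xs z; ty = t_ybar n D rho ys z;
         tx2 = t_x2bar n D rho xs z; txy = t_xybar n D rho xs ys z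
     in ((ty * tx2 - tx * txy) / (tx2 - tx\<^sup>2), (txy - tx * ty) / (tx2 - tx\<^sup>2)))"

definition tilde_betaN :: "nat \<Rightarrow> real \<Rightarrow> real \<Rightarrow> (nat \<Rightarrow> real) \<Rightarrow> (nat \<Rightarrow> real) \<Rightarrow> real \<times> real" where
  "tilde_betaN n D rho ys z = (t_ybar n D rho ys z, 0)"

definition conv_in_prob :: "(nat \<Rightarrow> 'a measure) \<Rightarrow> (nat \<Rightarrow> 'a \<Rightarrow> 'b::metric_space) \<Rightarrow> 'b \<Rightarrow> bool" where
  "conv_in_prob M X c \<longleftrightarrow>
     (\<forall>e>0. (\<lambda>n. measure (M n) {\<omega> \<in> space (M n). dist (X n \<omega>) c > e}) \<longlonglongrightarrow> 0)"

end

theory Submission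
  imports Defs
begin

definition pz :: "(nat \<Rightarrow> 'a measure) \<Rightarrow> (nat \<Rightarrow> 'a \<Rightarrow> real) \<Rightarrow> bool" where
  "pz M X \<longleftrightarrow> (\<forall>\<^sub>F n in sequentially. X n \<in> borel_measurable (M n)) \<and>
     (\<forall>e>0. \<forall>h>0. \<forall>\<^sub>F n in sequentially. measure (M n) {w \<in> space (M n). e < \<bar>X n w\<bar>} \<le> h)"

definition pb :: "(nat \<Rightarrow> 'a measure) \<Rightarrow> (nat \<Rightarrow> 'a \<Rightarrow> real) \<Rightarrow> bool" where
  "pb M X \<longleftrightarrow> (\<forall>\<^sub>F n in sequentially. X n \<in> borel_measurable (M n)) \<and>
     (\<forall>h>0. \<exists>K. \<forall>\<^sub>F n in sequentially. measure (M n) {w \<in> space (M n). K < \<bar>X n w\<bar>} \<le> h)"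

lemma cover2:
  assumes "prob_space N" "A \<subseteq> B \<union> C" "B \<in> sets N" "C \<in> sets N"
  shows "measure N A \<le> measure N B + measure N C"
proof -
  interpret prob_space N by fact
  have "measure N A \<le> measure N (B \<union> C)"
    using assms by (intro finite_measure_mono) auto
  also have "\<dots> \<le> measure N B + measure N C" using assms by (intro measure_Un_le) auto
  finally show ?thesis .
qed

lemma cover1:
  assumes "prob_space N" "A \<subseteq> B" "B \<in> sets N"
  shows "measure N A \<le> measure N B"
proof -
  interpret prob_space N by fact
  show ?thesis using assms by (intro finite_measure_mono) auto
qed

lemma set_gt_meas[measurable]:
  fixes X :: "'b \<Rightarrow> real"
  assumes "X \<in> borel_measurable N"
  shows "{w \<in> space N. e < \<bar>X w\<bar>} \<in> sets N"
proof -
  note [measurable] = assms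
  have "(\<lambda>w. \<bar>X w\<bar>) \<in> borel_measurable N" by measurable
  then have "(\<lambda>w. \<bar>X w\<bar>) -` {e<..} \<inter> space N \<in> sets N" by (rule measurable_sets) auto
  moreover have "(\<lambda>w. \<bar>X w\<bar>) -` {e<..} \<inter> space N = {w \<in> space N. e < \<bar>X w\<bar>}" by auto
  ultimately show ?thesis by simp
qed

lemma small_tendsto0:
  fixes f :: "nat \<Rightarrow> real"
  assumes "\<And>n. 0 \<le> f n" "\<And>h. h > 0 \<Longrightarrow> \<forall>\<^sub>F n in sequentially. f n \<le> h"
  shows "f \<longlonglongrightarrow> 0"
proof (rule order_tendstoI)
  fix a :: real assume "a < 0" then show "\<forall>\<^sub>F n in sequentially. a < f n"
    using assms(1) by (intro always_eventually allI) (auto intro: less_le_trans)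
next
  fix b :: real assume "0 < b"
  then have "\<forall>\<^sub>F n in sequentially. f n \<le> b/2" using assms(2)[of "b/2"] by auto
  then show "\<forall>\<^sub>F n in sequentially. f n < b"
    by eventually_elim (use \<open>0 < b\<close> in auto)
qed

lemma pzD: "pz M X \<Longrightarrow> e > 0 \<Longrightarrow> h > 0 \<Longrightarrow>
   \<forall>\<^sub>F n in sequentially. measure (M n) {w \<in> space (M n). e < \<bar>X n w\<bar>} \<le> h"
  unfolding pz_def by auto

lemma pz_meas: "pz M X \<Longrightarrow> \<forall>\<^sub>F n in sequentially. X n \<in> borel_measurable (M n)"
  unfolding pz_def by auto

lemma pb_meas: "pb M X \<Longrightarrow> \<forall>\<^sub>F n in sequentially. X n \<in> borel_measurable (M n)"
  unfolding pb_def by auto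

context
  fixes M :: "nat \<Rightarrow> 'a measure"
  assumes P: "\<forall>\<^sub>F n in sequentially. prob_space (M n)"
begin

lemma pz_add:
  assumes "pz M X" "pz M Y"
  shows "pz M (\<lambda>n w. X n w + Y n w)"
  unfolding pz_def
proof safe
  show "\<forall>\<^sub>F n in sequentially. (\<lambda>w. X n w + Y n w) \<in> borel_measurable (M n)"
    using pz_meas[OF assms(1)] pz_meas[OF assms(2)] by eventually_elim auto
  fix e h :: real assume e: "e > 0" and h: "h > 0"
  have "\<forall>\<^sub>F n in sequentially. measure (M n) {w \<in> space (M n). e/2 < \<bar>X n w\<bar>} \<le> h/2"
    using e h by (intro pzD[OF assms(1)]) auto
  moreover have "\<forall>\<^sub>F n in sequentially. measure (M n) {w \<in> space (M n). e/2 < \<bar>Y n w\<bar>} \<le> h/2"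
    using e h by (intro pzD[OF assms(2)]) auto
  ultimately show "\<forall>\<^sub>F n in sequentially. measure (M n) {w \<in> space (M n). e < \<bar>X n w + Y n w\<bar>} \<le> h"
    using P pz_meas[OF assms(1)] pz_meas[OF assms(2)]
  proof eventually_elim
    case (elim n)
    have "measure (M n) {w \<in> space (M n). e < \<bar>X n w + Y n w\<bar>} \<le>
      measure (M n) {w \<in> space (M n). e/2 < \<bar>X n w\<bar>} + measure (M n) {w \<in> space (M n). e/2 < \<bar>Y n w\<bar>}"
      using elim by (intro cover2) auto
    then show ?case using elim by simp
  qed
qed

lemma pz_neg:
  assumes "pz M X" shows "pz M (\<lambda>n w. - X n w)"
  unfolding pz_def
proof (intro conjI allI impI)
  show "\<forall>\<^sub>F n in sequentially. (\<lambda>w. - X n w) \<in> borel_measurable (M n)"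
    using pz_meas[OF assms] by eventually_elim auto
  fix e h :: real assume "e > 0" "h > 0"
  then show "\<forall>\<^sub>F n in sequentially. measure (M n) {w \<in> space (M n). e < \<bar>- X n w\<bar>} \<le> h"
    using pzD[OF assms] by simp
qed

lemma pz_diff:
  assumes "pz M X" "pz M Y"
  shows "pz M (\<lambda>n w. X n w - Y n w)"
  using pz_add[OF assms(1) pz_neg[OF assms(2)]] by simp

lemma pz_imp_pb: assumes "pz M X" shows "pb M X"
  unfolding pb_def
proof (intro conjI allI impI)
  show "\<forall>\<^sub>F n in sequentially. X n \<in> borel_measurable (M n)" using pz_meas[OF assms] .
  fix h :: real assume "h > 0"
  then have "\<forall>\<^sub>F n in sequentially. measure (M n) {w \<in> space (M n). 1 < \<bar>X n w\<bar>} \<le> h"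
    by (intro pzD[OF assms]) auto
  then show "\<exists>K. \<forall>\<^sub>F n in sequentially. measure (M n) {w \<in> space (M n). K < \<bar>X n w\<bar>} \<le> h" by blast
qed

lemma pb_mult:
  assumes "pb M X" "pb M Y"
  shows "pb M (\<lambda>n w. X n w * Y n w)"
  unfolding pb_def
proof safe
  show "\<forall>\<^sub>F n in sequentially. (\<lambda>w. X n w * Y n w) \<in> borel_measurable (M n)"
    using pb_meas[OF assms(1)] pb_meas[OF assms(2)] by eventually_elim auto
  fix h :: real assume h: "h > 0"
  obtain K1 where K1: "\<forall>\<^sub>F n in sequentially. measure (M n) {w \<in> space (M n). K1 < \<bar>X n w\<bar>} \<le> h/2"
    using assms(1) h unfolding pb_def by (meson half_gt_zero)
  obtain K2 where K2: "\<forall>\<^sub>F n in sequentially. measure (M n) {w \<in> space (M n). K2 < \<bar>Y n w\<bar>} \<le> h/2"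
    using assms(2) h unfolding pb_def by (meson half_gt_zero)
  define L1 where "L1 = max K1 0"
  define L2 where "L2 = max K2 0"
  show "\<exists>K. \<forall>\<^sub>F n in sequentially. measure (M n) {w \<in> space (M n). K < \<bar>X n w * Y n w\<bar>} \<le> h"
  proof (intro exI[of _ "L1 * L2"])
    show "\<forall>\<^sub>F n in sequentially. measure (M n) {w \<in> space (M n). L1 * L2 < \<bar>X n w * Y n w\<bar>} \<le> h"
      using K1 K2 P pb_meas[OF assms(1)] pb_meas[OF assms(2)]
    proof eventually_elim
      case (elim n)
      have sub: "{w \<in> space (M n). L1 * L2 < \<bar>X n w * Y n w\<bar>} \<subseteq>
          {w \<in> space (M n). K1 < \<bar>X n w\<bar>} \<union> {w \<in> space (M n). K2 < \<bar>Y n w\<bar>}"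
      proof safe
        fix w assume "w \<in> space (M n)" "L1 * L2 < \<bar>X n w * Y n w\<bar>" "\<not> K2 < \<bar>Y n w\<bar>"
        then have "\<bar>Y n w\<bar> \<le> L2" "L1 * L2 < \<bar>X n w\<bar> * \<bar>Y n w\<bar>" by (auto simp: L2_def abs_mult)
        moreover have "L1 \<ge> 0" "L2 \<ge> 0" by (auto simp: L1_def L2_def)
        ultimately have "L1 < \<bar>X n w\<bar>"
          using mult_mono[of "\<bar>X n w\<bar>" L1 "\<bar>Y n w\<bar>" L2] by (cases "L1 < \<bar>X n w\<bar>") auto
        then show "K1 < \<bar>X n w\<bar>" by (simp add: L1_def)
      qed
      have "measure (M n) {w \<in> space (M n). L1 * L2 < \<bar>X n w * Y n w\<bar>} \<le>
          measure (M n) {w \<in> space (M n). K1 < \<bar>X n w\<bar>} + measure (M n) {w \<in> space (M n). K2 < \<bar>Y n w\<bar>}"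
        using elim sub by (intro cover2) auto
      then show ?case using elim by simp
    qed
  qed
qed

lemma pz_mult_pb:
  assumes "pz M X" "pb M Y"
  shows "pz M (\<lambda>n w. X n w * Y n w)"
  unfolding pz_def
proof safe
  show "\<forall>\<^sub>F n in sequentially. (\<lambda>w. X n w * Y n w) \<in> borel_measurable (M n)"
    using pz_meas[OF assms(1)] pb_meas[OF assms(2)] by eventually_elim auto
  fix e h :: real assume e: "e > 0" and h: "h > 0"
  obtain K2 where K2: "\<forall>\<^sub>F n in sequentially. measure (M n) {w \<in> space (M n). K2 < \<bar>Y n w\<bar>} \<le> h/2"
    using assms(2) h unfolding pb_def by (meson half_gt_zero)
  define L where "L = max K2 1"
  have L: "L > 0" "L \<ge> K2" by (auto simp: L_def)
  have K1: "\<forall>\<^sub>F n in sequentially. measure (M n) {w \<in> space (M n). e / L < \<bar>X n w\<bar>} \<le> h/2"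
    using e h L by (intro pzD[OF assms(1)]) auto
  show "\<forall>\<^sub>F n in sequentially. measure (M n) {w \<in> space (M n). e < \<bar>X n w * Y n w\<bar>} \<le> h"
    using K1 K2 P pz_meas[OF assms(1)] pb_meas[OF assms(2)]
  proof eventually_elim
    case (elim n)
    have sub: "{w \<in> space (M n). e < \<bar>X n w * Y n w\<bar>} \<subseteq>
        {w \<in> space (M n). e / L < \<bar>X n w\<bar>} \<union> {w \<in> space (M n). K2 < \<bar>Y n w\<bar>}"
    proof safe
      fix w assume "w \<in> space (M n)" "e < \<bar>X n w * Y n w\<bar>" "\<not> K2 < \<bar>Y n w\<bar>"
      then have "\<bar>Y n w\<bar> \<le> L" "e < \<bar>X n w\<bar> * \<bar>Y n w\<bar>" using L by (auto simp: abs_mult)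
      moreover have "\<bar>X n w\<bar> * \<bar>Y n w\<bar> \<le> \<bar>X n w\<bar> * L"
        using \<open>\<bar>Y n w\<bar> \<le> L\<close> by (intro mult_left_mono) auto
      ultimately have "e < \<bar>X n w\<bar> * L" by linarith
      then show "e / L < \<bar>X n w\<bar>" using L by (simp add: divide_less_eq)
    qed
    have "measure (M n) {w \<in> space (M n). e < \<bar>X n w * Y n w\<bar>} \<le>
        measure (M n) {w \<in> space (M n). e / L < \<bar>X n w\<bar>} + measure (M n) {w \<in> space (M n). K2 < \<bar>Y n w\<bar>}"
      using elim sub by (intro cover2) auto
    then show ?case using elim by simp
  qed
qed

lemma pb_mult_pz:
  assumes "pb M X" "pz M Y"
  shows "pz M (\<lambda>n w. X n w * Y n w)"
  using pz_mult_pb[OF assms(2) assms(1)] by (simp add: mult.commute)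

lemma pb_add:
  assumes "pb M X" "pb M Y"
  shows "pb M (\<lambda>n w. X n w + Y n w)"
  unfolding pb_def
proof safe
  show "\<forall>\<^sub>F n in sequentially. (\<lambda>w. X n w + Y n w) \<in> borel_measurable (M n)"
    using pb_meas[OF assms(1)] pb_meas[OF assms(2)] by eventually_elim auto
  fix h :: real assume h: "h > 0"
  obtain K1 where K1: "\<forall>\<^sub>F n in sequentially. measure (M n) {w \<in> space (M n). K1 < \<bar>X n w\<bar>} \<le> h/2"
    using assms(1) h unfolding pb_def by (meson half_gt_zero)
  obtain K2 where K2: "\<forall>\<^sub>F n in sequentially. measure (M n) {w \<in> space (M n). K2 < \<bar>Y n w\<bar>} \<le> h/2"
    using assms(2) h unfolding pb_def by (meson half_gt_zero)
  show "\<exists>K. \<forall>\<^sub>F n in sequentially. measure (M n) {w \<in> space (M n). K < \<bar>X n w + Y n w\<bar>} \<le> h"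
  proof (intro exI[of _ "K1 + K2"])
    show "\<forall>\<^sub>F n in sequentially. measure (M n) {w \<in> space (M n). K1 + K2 < \<bar>X n w + Y n w\<bar>} \<le> h"
      using K1 K2 P pb_meas[OF assms(1)] pb_meas[OF assms(2)]
    proof eventually_elim
      case (elim n)
      have sub: "{w \<in> space (M n). K1 + K2 < \<bar>X n w + Y n w\<bar>} \<subseteq>
          {w \<in> space (M n). K1 < \<bar>X n w\<bar>} \<union> {w \<in> space (M n). K2 < \<bar>Y n w\<bar>}"
        by auto
      have "measure (M n) {w \<in> space (M n). K1 + K2 < \<bar>X n w + Y n w\<bar>} \<le>
          measure (M n) {w \<in> space (M n). K1 < \<bar>X n w\<bar>} + measure (M n) {w \<in> space (M n). K2 < \<bar>Y n w\<bar>}"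
        using elim sub by (intro cover2) auto
      then show ?case using elim by simp
    qed
  qed
qed

lemma pb_neg:
  assumes "pb M X" shows "pb M (\<lambda>n w. - X n w)"
  unfolding pb_def
proof (intro conjI allI impI)
  show "\<forall>\<^sub>F n in sequentially. (\<lambda>w. - X n w) \<in> borel_measurable (M n)"
    using pb_meas[OF assms] by eventually_elim auto
  fix h :: real assume "h > 0"
  then show "\<exists>K. \<forall>\<^sub>F n in sequentially. measure (M n) {w \<in> space (M n). K < \<bar>- X n w\<bar>} \<le> h"
    using assms unfolding pb_def by simp
qed

lemma pb_diff:
  assumes "pb M X" "pb M Y"
  shows "pb M (\<lambda>n w. X n w - Y n w)"
  using pb_add[OF assms(1) pb_neg[OF assms(2)]] by simp

lemma pz_det:
  fixes c :: "nat \<Rightarrow> real"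
  assumes "c \<longlonglongrightarrow> 0"
  shows "pz M (\<lambda>n w. c n)"
  unfolding pz_def
proof safe
  fix e h :: real assume e: "e > 0" and h: "h > 0"
  have "\<forall>\<^sub>F n in sequentially. \<bar>c n\<bar> < e"
    using assms e unfolding tendsto_iff dist_real_def by auto
  then show "\<forall>\<^sub>F n in sequentially. measure (M n) {w \<in> space (M n). e < \<bar>c n\<bar>} \<le> h"
    by eventually_elim (use h in auto)
qed auto

lemma pb_det:
  fixes c :: "nat \<Rightarrow> real"
  assumes "c \<longlonglongrightarrow> c0"
  shows "pb M (\<lambda>n w. c n)"
  unfolding pb_def
proof safe
  fix h :: real assume h: "h > 0"
  have "\<forall>\<^sub>F n in sequentially. dist (c n) c0 < 1"
    using assms by (simp add: tendsto_iff)
  then have "\<forall>\<^sub>F n in sequentially. measure (M n) {w \<in> space (M n). \<bar>c0\<bar> + 1 < \<bar>c n\<bar>} \<le> h"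
  proof eventually_elim
    case (elim n)
    then have "\<not> \<bar>c0\<bar> + 1 < \<bar>c n\<bar>" by (auto simp: dist_real_def)
    then show ?case using h by simp
  qed
  then show "\<exists>K. \<forall>\<^sub>F n in sequentially. measure (M n) {w \<in> space (M n). K < \<bar>c n\<bar>} \<le> h" by blast
qed auto

lemma pz_cong:
  assumes "pz M Y" "\<forall>\<^sub>F n in sequentially. \<forall>w\<in>space (M n). X n w = Y n w"
  shows "pz M X"
  unfolding pz_def
proof safe
  show "\<forall>\<^sub>F n in sequentially. X n \<in> borel_measurable (M n)"
    using pz_meas[OF assms(1)] assms(2)
  proof eventually_elim
    case (elim n)
    then show ?case by (subst measurable_cong[where g="Y n"]) auto
  qed
  fix e h :: real assume e: "e > 0" and h: "h > 0"
  have "\<forall>\<^sub>F n in sequentially. measure (M n) {w \<in> space (M n). e < \<bar>Y n w\<bar>} \<le> h"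
    using e h by (intro pzD[OF assms(1)]) auto
  then show "\<forall>\<^sub>F n in sequentially. measure (M n) {w \<in> space (M n). e < \<bar>X n w\<bar>} \<le> h"
    using assms(2)
  proof eventually_elim
    case (elim n)
    have "{w \<in> space (M n). e < \<bar>X n w\<bar>} = {w \<in> space (M n). e < \<bar>Y n w\<bar>}"
      using elim by auto
    then show ?case using elim by simp
  qed
qed

lemma pb_cong:
  assumes "pb M Y" "\<forall>\<^sub>F n in sequentially. \<forall>w\<in>space (M n). X n w = Y n w"
  shows "pb M X"
  unfolding pb_def
proof safe
  show "\<forall>\<^sub>F n in sequentially. X n \<in> borel_measurable (M n)"
    using pb_meas[OF assms(1)] assms(2)
  proof eventually_elim
    case (elim n)
    then show ?case by (subst measurable_cong[where g="Y n"]) auto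
  qed
  fix h :: real assume h: "h > 0"
  obtain K where "\<forall>\<^sub>F n in sequentially. measure (M n) {w \<in> space (M n). K < \<bar>Y n w\<bar>} \<le> h"
    using assms(1) h unfolding pb_def by auto
  then have "\<forall>\<^sub>F n in sequentially. measure (M n) {w \<in> space (M n). K < \<bar>X n w\<bar>} \<le> h"
    using assms(2)
  proof eventually_elim
    case (elim n)
    have "{w \<in> space (M n). K < \<bar>X n w\<bar>} = {w \<in> space (M n). K < \<bar>Y n w\<bar>}"
      using elim by auto
    then show ?case using elim by simp
  qed
  then show "\<exists>K. \<forall>\<^sub>F n in sequentially. measure (M n) {w \<in> space (M n). K < \<bar>X n w\<bar>} \<le> h" by blast
qed

lemma pz_transfer:
  assumes "pz M Y"
    and meas: "\<forall>\<^sub>F n in sequentially. X n \<in> borel_measurable (M n)"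
    and E: "\<And>h. h > 0 \<Longrightarrow> \<exists>E. \<forall>\<^sub>F n in sequentially. E n \<in> sets (M n) \<and>
         measure (M n) (space (M n) - E n) \<le> h \<and> (\<forall>w\<in>E n. X n w = Y n w)"
  shows "pz M X"
  unfolding pz_def
proof safe
  show "\<forall>\<^sub>F n in sequentially. X n \<in> borel_measurable (M n)" by fact
  fix e h :: real assume e: "e > 0" and h: "h > 0"
  obtain G where G: "\<forall>\<^sub>F n in sequentially. G n \<in> sets (M n) \<and>
         measure (M n) (space (M n) - G n) \<le> h/2 \<and> (\<forall>w\<in>G n. X n w = Y n w)"
    using E[of "h/2"] h by auto
  have "\<forall>\<^sub>F n in sequentially. measure (M n) {w \<in> space (M n). e < \<bar>Y n w\<bar>} \<le> h/2"
    using e h by (intro pzD[OF assms(1)]) auto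
  then show "\<forall>\<^sub>F n in sequentially. measure (M n) {w \<in> space (M n). e < \<bar>X n w\<bar>} \<le> h"
    using G P pz_meas[OF assms(1)]
  proof eventually_elim
    case (elim n)
    have sub: "{w \<in> space (M n). e < \<bar>X n w\<bar>} \<subseteq>
          {w \<in> space (M n). e < \<bar>Y n w\<bar>} \<union> (space (M n) - G n)"
      using elim by auto
    have "measure (M n) {w \<in> space (M n). e < \<bar>X n w\<bar>} \<le>
          measure (M n) {w \<in> space (M n). e < \<bar>Y n w\<bar>} + measure (M n) (space (M n) - G n)"
      using elim sub by (intro cover2) auto
    then show ?case using elim by simp
  qed
qed

lemma pz_event:
  assumes "pz M U" "c > 0" and that: "h > 0"
  shows "\<forall>\<^sub>F n in sequentially. {w \<in> space (M n). \<bar>U n w\<bar> \<le> c} \<in> sets (M n) \<and>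
     measure (M n) (space (M n) - {w \<in> space (M n). \<bar>U n w\<bar> \<le> c}) \<le> h"
proof -
  have "\<forall>\<^sub>F n in sequentially. measure (M n) {w \<in> space (M n). c < \<bar>U n w\<bar>} \<le> h"
    by (rule pzD[OF assms])
  then show ?thesis using pz_meas[OF assms(1)]
  proof eventually_elim
    case (elim n)
    have "space (M n) - {w \<in> space (M n). \<bar>U n w\<bar> \<le> c} = {w \<in> space (M n). c < \<bar>U n w\<bar>}" by auto
    with elim show ?case by simp
  qed
qed

lemma pz_div:
  fixes v :: "nat \<Rightarrow> real"
  assumes W: "pz M W" and V: "pz M (\<lambda>n w. V n w - v n)" and v: "v \<longlonglongrightarrow> v0" "v0 \<noteq> 0"
  shows "pz M (\<lambda>n w. W n w / V n w)"
  unfolding pz_def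
proof safe
  have Vm: "\<forall>\<^sub>F n in sequentially. V n \<in> borel_measurable (M n)"
    using pz_meas[OF V]
  proof eventually_elim
    case (elim n)
    then have "(\<lambda>w. (V n w - v n) + v n) \<in> borel_measurable (M n)" by measurable
    then show ?case by simp
  qed
  then show "\<forall>\<^sub>F n in sequentially. (\<lambda>w. W n w / V n w) \<in> borel_measurable (M n)"
    using pz_meas[OF W] by eventually_elim auto
  fix e h :: real assume e: "e > 0" and h: "h > 0"
  define c where "c = \<bar>v0\<bar> / 4"
  have c: "c > 0" using v by (auto simp: c_def)
  have "\<forall>\<^sub>F n in sequentially. dist (v n) v0 < 2 * c"
    using v c by (simp add: tendsto_iff)
  then have vb: "\<forall>\<^sub>F n in sequentially. 2 * c \<le> \<bar>v n\<bar>"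
    by eventually_elim (auto simp: c_def dist_real_def abs_if split: if_split_asm)
  have K1: "\<forall>\<^sub>F n in sequentially. measure (M n) {w \<in> space (M n). e * c < \<bar>W n w\<bar>} \<le> h/2"
    using e h c by (intro pzD[OF W]) auto
  have K2: "\<forall>\<^sub>F n in sequentially. measure (M n) {w \<in> space (M n). c < \<bar>V n w - v n\<bar>} \<le> h/2"
    using e h c by (intro pzD[OF V]) auto
  show "\<forall>\<^sub>F n in sequentially. measure (M n) {w \<in> space (M n). e < \<bar>W n w / V n w\<bar>} \<le> h"
    using K1 K2 vb P pz_meas[OF W] pz_meas[OF V]
  proof eventually_elim
    case (elim n)
    have sub: "{w \<in> space (M n). e < \<bar>W n w / V n w\<bar>} \<subseteq>
        {w \<in> space (M n). e * c < \<bar>W n w\<bar>} \<union> {w \<in> space (M n). c < \<bar>V n w - v n\<bar>}"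
    proof safe
      fix w assume "w \<in> space (M n)" "e < \<bar>W n w / V n w\<bar>" "\<not> c < \<bar>V n w - v n\<bar>"
      then have a: "c \<le> \<bar>V n w\<bar>" "e < \<bar>W n w\<bar> / \<bar>V n w\<bar>" using elim by auto
      then have "e * \<bar>V n w\<bar> < \<bar>W n w\<bar>" using c by (simp add: pos_less_divide_eq)
      moreover have "e * c \<le> e * \<bar>V n w\<bar>" using a e by simp
      ultimately show "e * c < \<bar>W n w\<bar>" by linarith
    qed
    have "measure (M n) {w \<in> space (M n). e < \<bar>W n w / V n w\<bar>} \<le>
        measure (M n) {w \<in> space (M n). e * c < \<bar>W n w\<bar>} + measure (M n) {w \<in> space (M n). c < \<bar>V n w - v n\<bar>}"
      using elim sub by (intro cover2) auto
    then show ?case using elim by simp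
  qed
qed

lemma conv_from_pz:
  fixes X :: "nat \<Rightarrow> 'a \<Rightarrow> real \<times> real"
  assumes "pz M (\<lambda>n w. fst (X n w))" "pz M (\<lambda>n w. snd (X n w))"
  shows "conv_in_prob M X 0"
  unfolding conv_in_prob_def
proof safe
  fix e :: real assume e: "e > 0"
  show "(\<lambda>n. measure (M n) {w \<in> space (M n). e < dist (X n w) 0}) \<longlonglongrightarrow> 0"
  proof (rule small_tendsto0)
    fix h :: real assume h: "h > 0"
    have K1: "\<forall>\<^sub>F n in sequentially. measure (M n) {w \<in> space (M n). e/2 < \<bar>fst (X n w)\<bar>} \<le> h/2"
      using e h by (intro pzD[OF assms(1)]) auto
    have K2: "\<forall>\<^sub>F n in sequentially. measure (M n) {w \<in> space (M n). e/2 < \<bar>snd (X n w)\<bar>} \<le> h/2"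
      using e h by (intro pzD[OF assms(2)]) auto
    show "\<forall>\<^sub>F n in sequentially. measure (M n) {w \<in> space (M n). e < dist (X n w) 0} \<le> h"
      using K1 K2 P pz_meas[OF assms(1)] pz_meas[OF assms(2)]
    proof eventually_elim
      case (elim n)
      have sub: "{w \<in> space (M n). e < dist (X n w) 0} \<subseteq>
        {w \<in> space (M n). e/2 < \<bar>fst (X n w)\<bar>} \<union> {w \<in> space (M n). e/2 < \<bar>snd (X n w)\<bar>}"
      proof safe
        fix w assume "w \<in> space (M n)" "e < dist (X n w) 0" "\<not> e / 2 < \<bar>snd (X n w)\<bar>"
        moreover have "dist (X n w) 0 \<le> \<bar>fst (X n w)\<bar> + \<bar>snd (X n w)\<bar>"
          using norm_Pair_le[of "fst (X n w)" "snd (X n w)"] by (simp add: dist_norm)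
        ultimately show "e / 2 < \<bar>fst (X n w)\<bar>" by linarith
      qed
      have "measure (M n) {w \<in> space (M n). e < dist (X n w) 0} \<le>
        measure (M n) {w \<in> space (M n). e/2 < \<bar>fst (X n w)\<bar>} + measure (M n) {w \<in> space (M n). e/2 < \<bar>snd (X n w)\<bar>}"
        using elim sub by (intro cover2) auto
      then show ?case using elim by simp
    qed
  qed simp
qed

end


lemma integrable_normal_sq:
  assumes "\<sigma> > 0"
  shows "integrable lborel (\<lambda>x. normal_density \<mu> \<sigma> x * x^2)"
proof -
  have eq: "(\<lambda>x. normal_density \<mu> \<sigma> x * x^2) = (\<lambda>x. normal_density \<mu> \<sigma> x * (x - \<mu>)^2 + 2 * \<mu> * (normal_density \<mu> \<sigma> x * (x - \<mu>)^1) + \<mu>^2 * normal_density \<mu> \<sigma> x)"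
    by (auto simp: fun_eq_iff power2_eq_square algebra_simps)
  show ?thesis unfolding eq
    using assms by (intro Bochner_Integration.integrable_add integrable_mult_right integrable_normal_moment integrable_normal_density)
qed

lemma (in prob_space) normal_tail:
  assumes D: "distributed M lborel X (\<lambda>t. ennreal (normal_density \<mu> \<sigma> t))" and s: "\<sigma> > 0"
    and K: "K > \<bar>\<mu>\<bar>"
  shows "prob {w \<in> space M. K < \<bar>X w\<bar>} \<le> \<sigma>\<^sup>2 / (K - \<bar>\<mu>\<bar>)\<^sup>2"
proof -
  have [measurable]: "X \<in> borel_measurable M"
    using distributed_measurable[OF D] by simp
  have int: "integrable M (\<lambda>x. X x ^ 2)"
    using distributed_integrable[OF D, of "\<lambda>x. x^2"] integrable_normal_sq[OF s, of \<mu>] by simp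
  have E: "expectation X = \<mu>" using normal_distributed_expectation[OF s D] .
  have V: "variance X = \<sigma>\<^sup>2" using normal_distributed_variance[OF s D] .
  have "prob {w \<in> space M. K < \<bar>X w\<bar>} \<le> prob {x\<in>space M. \<bar>X x - expectation X\<bar> \<ge> K - \<bar>\<mu>\<bar>}"
    using E by (intro finite_measure_mono) auto
  also have "\<dots> \<le> variance X / (K - \<bar>\<mu>\<bar>)\<^sup>2"
    using K by (intro Chebyshev_inequality int) auto
  finally show ?thesis using V by simp
qed

lemma (in prob_space) wsum_tail:
  fixes Y :: "'i \<Rightarrow> 'a \<Rightarrow> real"
  assumes I: "finite I" and ind: "indep_vars (\<lambda>_. borel) Y I"
    and D: "\<And>i. i \<in> I \<Longrightarrow> distributed M lborel (Y i) (\<lambda>t. ennreal (normal_density (m i) s t))"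
    and s: "s > 0"
    and K: "K > \<bar>\<Sum>i\<in>I. w i * m i\<bar>"
  shows "prob {x \<in> space M. K < \<bar>\<Sum>i\<in>I. w i * Y i x\<bar>} \<le> s\<^sup>2 * (\<Sum>i\<in>I. (w i)\<^sup>2) / (K - \<bar>\<Sum>i\<in>I. w i * m i\<bar>)\<^sup>2"
proof -
  define I' where "I' = {i \<in> I. w i \<noteq> 0}"
  have I': "finite I'" "I' \<subseteq> I" using I by (auto simp: I'_def)
  have eq1: "(\<Sum>i\<in>I. w i * Y i x) = (\<Sum>i\<in>I'. w i * Y i x)" for x
    using I unfolding I'_def by (intro sum.mono_neutral_right) auto
  have eq2: "(\<Sum>i\<in>I. w i * m i) = (\<Sum>i\<in>I'. w i * m i)"
    using I unfolding I'_def by (intro sum.mono_neutral_right) auto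
  have eq3: "(\<Sum>i\<in>I. (w i)\<^sup>2) = (\<Sum>i\<in>I'. (w i)\<^sup>2)"
    using I unfolding I'_def by (intro sum.mono_neutral_right) auto
  show ?thesis
  proof (cases "I' = {}")
    case True
    then have e: "{x \<in> space M. K < \<bar>\<Sum>i\<in>I. w i * Y i x\<bar>} = {}" using K eq1 eq2 by auto
    have "0 \<le> s\<^sup>2 * (\<Sum>i\<in>I. (w i)\<^sup>2) / (K - \<bar>\<Sum>i\<in>I. w i * m i\<bar>)\<^sup>2"
      by (intro divide_nonneg_nonneg mult_nonneg_nonneg sum_nonneg) auto
    then show ?thesis by (simp only: e measure_empty)
  next
    case False
    have DI: "distributed M lborel (\<lambda>x. w i * Y i x) (\<lambda>t. ennreal (normal_density (w i * m i) (\<bar>w i\<bar> * s) t))"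
      if "i \<in> I'" for i
      using normal_density_affine[OF D[of i] s, of "w i" 0] that by (auto simp: I'_def)
    have indI: "indep_vars (\<lambda>_. borel) (\<lambda>i x. w i * Y i x) I'"
      by (rule indep_vars_compose2[OF indep_vars_subset[OF ind I'(2)]]) auto
    have S: "distributed M lborel (\<lambda>x. \<Sum>i\<in>I'. w i * Y i x)
        (normal_density (\<Sum>i\<in>I'. w i * m i) (sqrt (\<Sum>i\<in>I'. (\<bar>w i\<bar> * s)\<^sup>2)))"
      using s by (intro sum_indep_normal I'(1) False indI DI) (auto simp: I'_def)
    have sq: "(\<Sum>i\<in>I'. (\<bar>w i\<bar> * s)\<^sup>2) = s\<^sup>2 * (\<Sum>i\<in>I'. (w i)\<^sup>2)"
      by (simp add: sum_distrib_left power_mult_distrib mult.commute)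
    have pos: "0 < (\<Sum>i\<in>I'. (\<bar>w i\<bar> * s)\<^sup>2)"
      using False s I'(1) by (intro sum_pos) (auto simp: I'_def)
    have "prob {x \<in> space M. K < \<bar>\<Sum>i\<in>I'. w i * Y i x\<bar>} \<le>
        (sqrt (\<Sum>i\<in>I'. (\<bar>w i\<bar> * s)\<^sup>2))\<^sup>2 / (K - \<bar>\<Sum>i\<in>I'. w i * m i\<bar>)\<^sup>2"
      using K eq2 pos by (intro normal_tail[OF S]) auto
    then show ?thesis using pos sq eq1 eq2 eq3 by simp
  qed
qed


lemma one_over_sqrt_lim: "(\<lambda>n. 1 / sqrt (real n)) \<longlonglongrightarrow> 0"
proof -
  have "(\<lambda>n. sqrt (1 / real n)) \<longlonglongrightarrow> sqrt 0"
    by (intro tendsto_real_sqrt lim_1_over_n)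
  then show ?thesis by (simp add: real_sqrt_divide)
qed

lemma noise_lim:
  fixes A rho :: "nat \<Rightarrow> real" and k :: real
  assumes A: "(\<lambda>n. A n / (rho n * real n)) \<longlonglongrightarrow> 0"
  shows "(\<lambda>n. sqrt (real n) * sqrt (k * A n / (rho n * (real n)\<^sup>2))) \<longlonglongrightarrow> 0"
    and "(\<lambda>n. sqrt (k * A n / (rho n * (real n)\<^sup>2))) \<longlonglongrightarrow> 0"
proof -
  have L: "(\<lambda>n. sqrt (k * (A n / (rho n * real n)))) \<longlonglongrightarrow> sqrt (k * 0)"
    by (intro tendsto_real_sqrt tendsto_mult tendsto_const A)
  then have L: "(\<lambda>n. sqrt (k * (A n / (rho n * real n)))) \<longlonglongrightarrow> 0" by simp
  have eq: "sqrt (real n) * sqrt (k * A n / (rho n * (real n)\<^sup>2)) = sqrt (k * (A n / (rho n * real n)))"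
    if "n > 0" for n
  proof -
    have "sqrt (real n) * sqrt (k * A n / (rho n * (real n)\<^sup>2)) = sqrt (real n * (k * A n / (rho n * (real n)\<^sup>2)))"
      by (rule real_sqrt_mult[symmetric])
    also have "real n * (k * A n / (rho n * (real n)\<^sup>2)) = k * (A n / (rho n * real n))"
      using that by (simp add: power2_eq_square field_simps)
    finally show ?thesis .
  qed
  show 1: "(\<lambda>n. sqrt (real n) * sqrt (k * A n / (rho n * (real n)\<^sup>2))) \<longlonglongrightarrow> 0"
  proof (rule Lim_transform_eventually[OF L])
    show "\<forall>\<^sub>F n in sequentially. sqrt (k * (A n / (rho n * real n))) = sqrt (real n) * sqrt (k * A n / (rho n * (real n)\<^sup>2))"
      unfolding eventually_sequentially by (intro exI[of _ 1] allI impI, rule eq[symmetric]) auto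
  qed
  have "(\<lambda>n. (1 / sqrt (real n)) * (sqrt (real n) * sqrt (k * A n / (rho n * (real n)\<^sup>2)))) \<longlonglongrightarrow> 0 * 0"
    by (intro tendsto_mult one_over_sqrt_lim 1)
  then show "(\<lambda>n. sqrt (k * A n / (rho n * (real n)\<^sup>2))) \<longlonglongrightarrow> 0"
    unfolding mult_zero_left by (rule Lim_transform_eventually) (auto simp: eventually_sequentially intro!: exI[of _ 1])
qed

lemma pb_stdnormal:
  assumes P: "\<forall>\<^sub>F n in sequentially. prob_space (M n)"
    and D: "\<forall>\<^sub>F n in sequentially. distributed (M n) lborel (Z n) (\<lambda>t. ennreal (std_normal_density t))"
  shows "pb M Z"
  unfolding pb_def
proof (intro conjI allI impI)
  show "\<forall>\<^sub>F n in sequentially. Z n \<in> borel_measurable (M n)"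
    using D by eventually_elim (use distributed_measurable in force)
  fix h :: real assume h: "h > 0"
  define K where "K = 1 + 1 / h"
  have K: "K \<ge> 1" "K > 1 / h" using h by (auto simp: K_def)
  have b: "1 / K\<^sup>2 \<le> h"
  proof -
    have "1 / K\<^sup>2 \<le> 1 / K" using K by (simp add: power2_eq_square divide_simps)
    also have "1 / K \<le> h" using K h by (simp add: divide_simps mult.commute)
    finally show ?thesis .
  qed
  have "\<forall>\<^sub>F n in sequentially. measure (M n) {w \<in> space (M n). K < \<bar>Z n w\<bar>} \<le> h"
    using P D
  proof eventually_elim
    case (elim n)
    interpret prob_space "M n" by fact
    have "prob {w \<in> space (M n). K < \<bar>Z n w\<bar>} \<le> 1\<^sup>2 / (K - \<bar>0\<bar>)\<^sup>2"
      using K by (intro normal_tail[OF elim(2)]) auto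
    then show ?case using b by simp
  qed
  then show "\<exists>K. \<forall>\<^sub>F n in sequentially. measure (M n) {w \<in> space (M n). K < \<bar>Z n w\<bar>} \<le> h" by blast
qed

lemma pb_wsum:
  fixes y :: "nat \<Rightarrow> nat \<Rightarrow> 'a \<Rightarrow> real" and Z :: "nat \<Rightarrow> nat \<Rightarrow> 'a \<Rightarrow> real"
  assumes P: "\<forall>\<^sub>F n in sequentially. prob_space (M n)"
    and D: "\<forall>\<^sub>F n in sequentially. \<forall>i<n. distributed (M n) lborel (y n i) (\<lambda>t. ennreal (normal_density (m n i) s t))"
    and s: "s > 0"
    and ind: "\<forall>\<^sub>F n in sequentially. prob_space.indep_vars (M n) (\<lambda>_. borel)
          (\<lambda>j. case j of Inl i \<Rightarrow> y n i | Inr k \<Rightarrow> Z n k) (Inl ` {..<n} \<union> Inr ` {..<4})"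
    and B1: "\<forall>\<^sub>F n in sequentially. \<bar>\<Sum>i<n. w n i * m n i\<bar> \<le> B"
    and B2: "\<forall>\<^sub>F n in sequentially. (\<Sum>i<n. (w n i)\<^sup>2) \<le> B"
  shows "pb M (\<lambda>n x. \<Sum>i<n. w n i * y n i x)"
  unfolding pb_def
proof (intro conjI allI impI)
  show "\<forall>\<^sub>F n in sequentially. (\<lambda>x. \<Sum>i<n. w n i * y n i x) \<in> borel_measurable (M n)"
    using D
  proof eventually_elim
    case (elim n)
    have "y n i \<in> borel_measurable (M n)" if "i \<in> {..<n}" for i
    proof -
      have "y n i \<in> measurable (M n) lborel"
        using elim that by (intro distributed_measurable[of _ _ _ "\<lambda>t. ennreal (normal_density (m n i) s t)"]) auto
      then show ?thesis by simp
    qed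
    then show ?case by (intro borel_measurable_sum) auto
  qed
  fix h :: real assume h: "h > 0"
  have B0: "\<forall>\<^sub>F n in sequentially. 0 \<le> B"
    using B2
  proof eventually_elim
    case (elim n)
    have "0 \<le> (\<Sum>i<n. (w n i)\<^sup>2)" by (simp add: sum_nonneg)
    with elim show ?case by linarith
  qed
  define t where "t = max 1 (s\<^sup>2 * B / h)"
  have t: "t \<ge> 1" "t \<ge> s\<^sup>2 * B / h" by (auto simp: t_def)
  have "\<forall>\<^sub>F n in sequentially. measure (M n) {x \<in> space (M n). B + t < \<bar>\<Sum>i<n. w n i * y n i x\<bar>} \<le> h"
    using P D ind B1 B2 B0
  proof eventually_elim
    case (elim n)
    interpret prob_space "M n" by fact
    define I :: "(nat + nat) set" where "I = Inl ` {..<n}"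
    define Y where "Y = (\<lambda>j. case j of Inl i \<Rightarrow> y n i | Inr k \<Rightarrow> Z n k)"
    define w' where "w' = (\<lambda>j. case j of Inl i \<Rightarrow> w n i | Inr (k::nat) \<Rightarrow> 0)"
    define m' where "m' = (\<lambda>j. case j of Inl i \<Rightarrow> m n i | Inr (k::nat) \<Rightarrow> 0)"
    have r1: "(\<Sum>j\<in>I. w' j * Y j x) = (\<Sum>i<n. w n i * y n i x)" for x
      by (simp add: I_def w'_def Y_def sum.reindex)
    have r2: "(\<Sum>j\<in>I. w' j * m' j) = (\<Sum>i<n. w n i * m n i)"
      by (simp add: I_def w'_def m'_def sum.reindex)
    have r3: "(\<Sum>j\<in>I. (w' j)\<^sup>2) = (\<Sum>i<n. (w n i)\<^sup>2)"
      by (simp add: I_def w'_def sum.reindex)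
    have indI: "indep_vars (\<lambda>_. borel) Y I"
      using elim(3) unfolding Y_def I_def by (rule indep_vars_subset) auto
    have DI: "distributed (M n) lborel (Y j) (\<lambda>t. ennreal (normal_density (m' j) s t))" if "j \<in> I" for j
      using that elim(2) by (auto simp: I_def Y_def m'_def)
    have "prob {x \<in> space (M n). B + t < \<bar>\<Sum>j\<in>I. w' j * Y j x\<bar>} \<le>
        s\<^sup>2 * (\<Sum>j\<in>I. (w' j)\<^sup>2) / (B + t - \<bar>\<Sum>j\<in>I. w' j * m' j\<bar>)\<^sup>2"
      using elim(4) t r2 by (intro wsum_tail[OF _ indI DI s]) (auto simp: I_def)
    then have 1: "prob {x \<in> space (M n). B + t < \<bar>\<Sum>i<n. w n i * y n i x\<bar>} \<le>
        s\<^sup>2 * (\<Sum>i<n. (w n i)\<^sup>2) / (B + t - \<bar>\<Sum>i<n. w n i * m n i\<bar>)\<^sup>2"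
      by (simp add: r1 r2 r3)
    have d1: "t \<le> B + t - \<bar>\<Sum>i<n. w n i * m n i\<bar>" using elim(4) by simp
    have "s\<^sup>2 * (\<Sum>i<n. (w n i)\<^sup>2) / (B + t - \<bar>\<Sum>i<n. w n i * m n i\<bar>)\<^sup>2 \<le> s\<^sup>2 * B / t\<^sup>2"
    proof (rule frac_le)
      show "0 \<le> s\<^sup>2 * B" using elim(6) by simp
      show "s\<^sup>2 * (\<Sum>i<n. (w n i)\<^sup>2) \<le> s\<^sup>2 * B" using elim(5) by (simp add: mult_left_mono)
      show "0 < t\<^sup>2" using t by simp
      show "t\<^sup>2 \<le> (B + t - \<bar>\<Sum>i<n. w n i * m n i\<bar>)\<^sup>2" using d1 t by (intro power_mono) auto
    qed
    also have "s\<^sup>2 * B / t\<^sup>2 \<le> s\<^sup>2 * B / t"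
      using t elim(6) by (intro divide_left_mono) (auto simp: power2_eq_square)
    also have "s\<^sup>2 * B / t \<le> h"
    proof -
      have t0: "t > 0" using t by simp
      have "s\<^sup>2 * B \<le> t * h" using t(2) h by (simp add: pos_divide_le_eq)
      then show ?thesis using t0 by (simp add: pos_divide_le_eq mult.commute)
    qed
    finally show ?case using 1 by simp
  qed
  then show "\<exists>K. \<forall>\<^sub>F n in sequentially. measure (M n) {x \<in> space (M n). K < \<bar>\<Sum>i<n. w n i * y n i x\<bar>} \<le> h"
    by blast
qed

context
  fixes M :: "nat \<Rightarrow> 'a measure"
  assumes P: "\<forall>\<^sub>F n in sequentially. prob_space (M n)"
begin

lemma pz_ratio:
  fixes Q :: "nat \<Rightarrow> real"
  assumes A: "pz M (\<lambda>n w. sqrt (real n) * (P' n w - Pp n w))"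
    and B: "pz M (\<lambda>n w. sqrt (real n) * (Q' n w - Q n))"
    and Pb: "pb M Pp"
    and Q: "Q \<longlonglongrightarrow> q0" "q0 \<noteq> 0"
    and meas: "\<forall>\<^sub>F n in sequentially. P' n \<in> borel_measurable (M n) \<and> Q' n \<in> borel_measurable (M n)"
  shows "pz M (\<lambda>n w. sqrt (real n) * (P' n w / Q' n w - Pp n w / Q n))"
proof -
  define Y where "Y = (\<lambda>n w. (sqrt (real n) * (P' n w - Pp n w) * Q n - Pp n w * (sqrt (real n) * (Q' n w - Q n)))
     / (Q n * Q' n w))"
  have W: "pz M (\<lambda>n w. sqrt (real n) * (P' n w - Pp n w) * Q n - Pp n w * (sqrt (real n) * (Q' n w - Q n)))"
    by (intro pz_diff[OF P] pz_mult_pb[OF P] pb_mult_pz[OF P] A B Pb pb_det[OF P Q(1)])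
  have V0: "pz M (\<lambda>n w. Q n * (sqrt (real n) * (Q' n w - Q n) * (1 / sqrt (real n))))"
    by (intro pb_mult_pz[OF P] pz_mult_pb[OF P] B pb_det[OF P Q(1)] pb_det[OF P one_over_sqrt_lim])
  have V: "pz M (\<lambda>n w. Q n * Q' n w - (Q n)\<^sup>2)"
    by (rule pz_cong[OF P V0]) (auto simp: eventually_sequentially power2_eq_square algebra_simps intro!: exI[of _ 1])
  have pzY: "pz M Y"
    unfolding Y_def
    by (rule pz_div[OF P W V, of "q0\<^sup>2"]) (use Q in \<open>auto intro: tendsto_intros\<close>)
  define c where "c = \<bar>q0\<bar> / 4"
  have c: "c > 0" using Q by (auto simp: c_def)
  have "\<forall>\<^sub>F n in sequentially. dist (Q n) q0 < 2 * c"
    using Q c by (simp add: tendsto_iff)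
  then have Qb: "\<forall>\<^sub>F n in sequentially. 2 * c \<le> \<bar>Q n\<bar>"
    by eventually_elim (auto simp: c_def dist_real_def abs_if split: if_split_asm)
  show ?thesis
  proof (rule pz_transfer[OF P pzY])
    show "\<forall>\<^sub>F n in sequentially. (\<lambda>w. sqrt (real n) * (P' n w / Q' n w - Pp n w / Q n)) \<in> borel_measurable (M n)"
      using meas pb_meas[OF Pb]
    proof eventually_elim
      case (elim n)
      then have [measurable]: "P' n \<in> borel_measurable (M n)" "Q' n \<in> borel_measurable (M n)"
        "Pp n \<in> borel_measurable (M n)" by auto
      show ?case by measurable
    qed
    fix h :: real assume h: "h > 0"
    have ev: "\<forall>\<^sub>F n in sequentially. {w \<in> space (M n). \<bar>sqrt (real n) * (Q' n w - Q n)\<bar> \<le> c} \<in> sets (M n) \<and>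
     measure (M n) (space (M n) - {w \<in> space (M n). \<bar>sqrt (real n) * (Q' n w - Q n)\<bar> \<le> c}) \<le> h"
      by (rule pz_event[OF P B c h])
    show "\<exists>E. \<forall>\<^sub>F n in sequentially. E n \<in> sets (M n) \<and> measure (M n) (space (M n) - E n) \<le> h \<and>
       (\<forall>w\<in>E n. sqrt (real n) * (P' n w / Q' n w - Pp n w / Q n) = Y n w)"
    proof (intro exI[of _ "\<lambda>n. {w \<in> space (M n). \<bar>sqrt (real n) * (Q' n w - Q n)\<bar> \<le> c}"])
      show "\<forall>\<^sub>F n in sequentially. {w \<in> space (M n). \<bar>sqrt (real n) * (Q' n w - Q n)\<bar> \<le> c} \<in> sets (M n) \<and>
         measure (M n) (space (M n) - {w \<in> space (M n). \<bar>sqrt (real n) * (Q' n w - Q n)\<bar> \<le> c}) \<le> h \<and>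
         (\<forall>w\<in>{w \<in> space (M n). \<bar>sqrt (real n) * (Q' n w - Q n)\<bar> \<le> c}.
            sqrt (real n) * (P' n w / Q' n w - Pp n w / Q n) = Y n w)"
        using ev Qb eventually_ge_at_top[of 1]
      proof eventually_elim
        case (elim n)
        have "sqrt (real n) * (P' n w / Q' n w - Pp n w / Q n) = Y n w"
          if w: "\<bar>sqrt (real n) * (Q' n w - Q n)\<bar> \<le> c" for w
        proof -
          have s1: "sqrt (real n) \<ge> 1" using elim(3) by simp
          have "\<bar>Q' n w - Q n\<bar> \<le> \<bar>sqrt (real n) * (Q' n w - Q n)\<bar>"
            using s1 by (simp add: abs_mult mult_le_cancel_right1)
          then have "\<bar>Q' n w - Q n\<bar> \<le> c" using w by linarith
          then have "Q' n w \<noteq> 0" "Q n \<noteq> 0" using elim(2) c by auto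
          then show ?thesis unfolding Y_def by (simp add: field_simps)
        qed
        then show ?case using elim(1) by auto
      qed
    qed
  qed
qed

lemma conv_from_event:
  fixes X :: "nat \<Rightarrow> 'a \<Rightarrow> real \<times> real"
  assumes Y1: "pz M Y1" and Y2: "pz M Y2"
    and E: "\<And>h. h > 0 \<Longrightarrow> \<exists>E. \<forall>\<^sub>F n in sequentially. E n \<in> sets (M n) \<and>
         measure (M n) (space (M n) - E n) \<le> h \<and> (\<forall>w\<in>E n. fst (X n w) = Y1 n w \<and> snd (X n w) = Y2 n w)"
  shows "conv_in_prob M X 0"
  unfolding conv_in_prob_def
proof safe
  fix e :: real assume e: "e > 0"
  show "(\<lambda>n. measure (M n) {w \<in> space (M n). e < dist (X n w) 0}) \<longlonglongrightarrow> 0"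
  proof (rule small_tendsto0)
    fix h :: real assume h: "h > 0"
    obtain G where G: "\<forall>\<^sub>F n in sequentially. G n \<in> sets (M n) \<and>
         measure (M n) (space (M n) - G n) \<le> h/3 \<and> (\<forall>w\<in>G n. fst (X n w) = Y1 n w \<and> snd (X n w) = Y2 n w)"
      using E[of "h/3"] h by auto
    have K1: "\<forall>\<^sub>F n in sequentially. measure (M n) {w \<in> space (M n). e/2 < \<bar>Y1 n w\<bar>} \<le> h/3"
      using e h by (intro pzD[OF Y1]) auto
    have K2: "\<forall>\<^sub>F n in sequentially. measure (M n) {w \<in> space (M n). e/2 < \<bar>Y2 n w\<bar>} \<le> h/3"
      using e h by (intro pzD[OF Y2]) auto
    show "\<forall>\<^sub>F n in sequentially. measure (M n) {w \<in> space (M n). e < dist (X n w) 0} \<le> h"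
      using K1 K2 G P pz_meas[OF Y1] pz_meas[OF Y2]
    proof eventually_elim
      case (elim n)
      have sub: "{w \<in> space (M n). e < dist (X n w) 0} \<subseteq>
        ({w \<in> space (M n). e/2 < \<bar>Y1 n w\<bar>} \<union> {w \<in> space (M n). e/2 < \<bar>Y2 n w\<bar>}) \<union> (space (M n) - G n)"
      proof (rule subsetI)
        fix w assume "w \<in> {w \<in> space (M n). e < dist (X n w) 0}"
        then have w: "w \<in> space (M n)" "e < dist (X n w) 0" by auto
        have dl: "dist (X n w) 0 \<le> \<bar>fst (X n w)\<bar> + \<bar>snd (X n w)\<bar>"
          using norm_Pair_le[of "fst (X n w)" "snd (X n w)"] by (simp add: dist_norm)
        show "w \<in> ({w \<in> space (M n). e/2 < \<bar>Y1 n w\<bar>} \<union> {w \<in> space (M n). e/2 < \<bar>Y2 n w\<bar>}) \<union> (space (M n) - G n)"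
        proof (cases "w \<in> G n")
          case True
          then have "fst (X n w) = Y1 n w" "snd (X n w) = Y2 n w" using elim by auto
          then have "e < \<bar>Y1 n w\<bar> + \<bar>Y2 n w\<bar>" using dl w by linarith
          then have "e/2 < \<bar>Y1 n w\<bar> \<or> e/2 < \<bar>Y2 n w\<bar>" by linarith
          then show ?thesis using w by auto
        next
          case False
          then show ?thesis using w by auto
        qed
      qed
      have "measure (M n) {w \<in> space (M n). e < dist (X n w) 0} \<le>
        measure (M n) ({w \<in> space (M n). e/2 < \<bar>Y1 n w\<bar>} \<union> {w \<in> space (M n). e/2 < \<bar>Y2 n w\<bar>})
         + measure (M n) (space (M n) - G n)"
        using elim sub by (intro cover2) auto
      also have "measure (M n) ({w \<in> space (M n). e/2 < \<bar>Y1 n w\<bar>} \<union> {w \<in> space (M n). e/2 < \<bar>Y2 n w\<bar>})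
        \<le> measure (M n) {w \<in> space (M n). e/2 < \<bar>Y1 n w\<bar>} + measure (M n) {w \<in> space (M n). e/2 < \<bar>Y2 n w\<bar>}"
        using elim by (intro measure_Un_le) auto
      finally show ?case using elim by simp
    qed
  qed simp
qed

end


theorem lemma5p11:
  fixes sigma_e beta2 beta1 c_x c_x2 :: real
    and x :: "nat \<Rightarrow> nat \<Rightarrow> real"
    and M :: "nat \<Rightarrow> 'a measure"
    and y :: "nat \<Rightarrow> nat \<Rightarrow> 'a \<Rightarrow> real"
    and Z :: "nat \<Rightarrow> nat \<Rightarrow> 'a \<Rightarrow> real"
    and Delta rho :: "nat \<Rightarrow> real"
  assumes sigma_pos: "sigma_e > 0"
    and prob: "\<And>n. n > 2 \<Longrightarrow> prob_space (M n)"
    and y_distr: "\<And>n i. n > 2 \<Longrightarrow> i < n \<Longrightarrow>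
        distributed (M n) lborel (y n i)
          (\<lambda>t. ennreal (normal_density (beta2 + beta1 * x n i) sigma_e t))"
    and Z_distr: "\<And>n k. n > 2 \<Longrightarrow> k < 4 \<Longrightarrow>
        distributed (M n) lborel (Z n k) (\<lambda>t. ennreal (std_normal_density t))"
    and indep: "\<And>n. n > 2 \<Longrightarrow>
        prob_space.indep_vars (M n) (\<lambda>_. borel)
          (\<lambda>j. case j of Inl i \<Rightarrow> y n i | Inr k \<Rightarrow> Z n k)
          (Inl ` {..<n} \<union> Inr ` {..<4})"
    and Delta_pos: "\<And>n. n > 2 \<Longrightarrow> Delta n > 0"
    and rho_pos: "\<And>n. n > 2 \<Longrightarrow> rho n > 0"
    and A1: "(\<lambda>n. avg n (x n)) \<longlonglongrightarrow> c_x"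
        "(\<lambda>n. avg n (\<lambda>i. (x n i)\<^sup>2)) \<longlonglongrightarrow> c_x2"
        "c_x2 > c_x\<^sup>2"
    and A2: "\<exists>eta::real. (\<lambda>n. (\<Sum>i<n. ((beta2 + beta1 * x n i)
                   - (beta2 + beta1 * avg n (x n)))\<^sup>2) / sigma_e\<^sup>2) \<longlonglongrightarrow> eta\<^sup>2"
    and A3: "(\<lambda>n. (Delta n)\<^sup>2 / (rho n * real n)) \<longlonglongrightarrow> 0"
        "(\<lambda>n. (Delta n) ^ 4 / (rho n * real n)) \<longlonglongrightarrow> 0"
    and A4: "(\<lambda>n. measure (M n)
               {\<omega> \<in> space (M n). \<exists>i<n. y n i \<omega> \<notin> {- Delta n .. Delta n}}) \<longlonglongrightarrow> 0"
        "\<And>n i. n > 2 \<Longrightarrow> i < n \<Longrightarrow> x n i \<in> {- Delta n .. Delta n}"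
  shows "conv_in_prob M
           (\<lambda>n \<omega>. sqrt (real n) *\<^sub>R
              (tilde_betaN n (Delta n) (rho n) (\<lambda>i. y n i \<omega>) (\<lambda>k. Z n k \<omega>)
               - hat_betaN n (\<lambda>i. y n i \<omega>))) 0
       \<and> conv_in_prob M
           (\<lambda>n \<omega>. sqrt (real n) *\<^sub>R
              (tilde_beta n (Delta n) (rho n) (x n) (\<lambda>i. y n i \<omega>) (\<lambda>k. Z n k \<omega>)
               - hat_beta n (x n) (\<lambda>i. y n i \<omega>))) 0"
proof -
  have P: "\<forall>\<^sub>F n in sequentially. prob_space (M n)"
    using prob by (auto simp: eventually_sequentially intro!: exI[of _ 3])
  have ev3: "\<forall>\<^sub>F n in sequentially. 2 < n" by (rule eventually_gt_at_top)
  have ym: "y n i \<in> borel_measurable (M n)" if "n > 2" "i < n" for n i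
  proof -
    have "y n i \<in> measurable (M n) lborel" by (rule distributed_measurable[OF y_distr[OF that]])
    then show ?thesis by simp
  qed
  have Zm: "Z n k \<in> borel_measurable (M n)" if "n > 2" "k < 4" for n k
  proof -
    have "Z n k \<in> measurable (M n) lborel" by (rule distributed_measurable[OF Z_distr[OF that]])
    then show ?thesis by simp
  qed
  have pbZ: "pb M (\<lambda>n. Z n k)" if "k < 4" for k
  proof (rule pb_stdnormal[OF P])
    show "\<forall>\<^sub>F n in sequentially. distributed (M n) lborel (Z n k) (\<lambda>t. ennreal (std_normal_density t))"
      using ev3 by eventually_elim (use Z_distr that in auto)
  qed
  have pzN: "pz M (\<lambda>n w. f n * Z n k w)" if "f \<longlonglongrightarrow> 0" "k < 4" for f k
    by (rule pz_mult_pb[OF P pz_det[OF P that(1)] pbZ[OF that(2)]])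

  define xb where "xb = (\<lambda>n. avg n (x n))"
  define x2 where "x2 = (\<lambda>n. avg n (\<lambda>i. (x n i)\<^sup>2))"
  define yb where "yb = (\<lambda>n w. avg n (\<lambda>i. y n i w))"
  define xy where "xy = (\<lambda>n w. avg n (\<lambda>i. x n i * y n i w))"
  define a where "a = (\<lambda>n. sqrt (2 * (Delta n)\<^sup>2 / ((rho n / 5) * (real n)\<^sup>2)))"
  define b where "b = (\<lambda>n. sqrt ((Delta n) ^ 4 / (2 * (rho n / 5) * (real n)\<^sup>2)))"
  define c where "c = (\<lambda>n. sqrt (2 * (Delta n) ^ 4 / ((rho n / 5) * (real n)\<^sup>2)))"
  have a_eq: "a = (\<lambda>n. sqrt (10 * (Delta n)\<^sup>2 / (rho n * (real n)\<^sup>2)))"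
    by (simp add: a_def fun_eq_iff field_simps)
  have b_eq: "b = (\<lambda>n. sqrt ((5/2) * (Delta n) ^ 4 / (rho n * (real n)\<^sup>2)))"
    by (simp add: b_def fun_eq_iff field_simps)
  have c_eq: "c = (\<lambda>n. sqrt (10 * (Delta n) ^ 4 / (rho n * (real n)\<^sup>2)))"
    by (simp add: c_def fun_eq_iff field_simps)
  have la: "a \<longlonglongrightarrow> 0" "(\<lambda>n. sqrt (real n) * a n) \<longlonglongrightarrow> 0"
    unfolding a_eq by (rule noise_lim[OF A3(1)])+
  have lb: "b \<longlonglongrightarrow> 0" "(\<lambda>n. sqrt (real n) * b n) \<longlonglongrightarrow> 0"
    unfolding b_eq by (rule noise_lim[OF A3(2)])+
  have lc: "c \<longlonglongrightarrow> 0" "(\<lambda>n. sqrt (real n) * c n) \<longlonglongrightarrow> 0"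
    unfolding c_eq by (rule noise_lim[OF A3(2)])+
  have xbB: "\<forall>\<^sub>F n in sequentially. \<bar>xb n\<bar> \<le> \<bar>c_x\<bar> + 1"
  proof -
    have "\<forall>\<^sub>F n in sequentially. dist (xb n) c_x < 1" using A1(1) by (simp add: xb_def tendsto_iff)
    then show ?thesis by eventually_elim (auto simp: dist_real_def)
  qed
  have x2B: "\<forall>\<^sub>F n in sequentially. \<bar>x2 n\<bar> \<le> \<bar>c_x2\<bar> + 1"
  proof -
    have "\<forall>\<^sub>F n in sequentially. dist (x2 n) c_x2 < 1" using A1(2) by (simp add: x2_def tendsto_iff)
    then show ?thesis by eventually_elim (auto simp: dist_real_def)
  qed
  have yD: "\<forall>\<^sub>F n in sequentially. \<forall>i<n. distributed (M n) lborel (y n i)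
      (\<lambda>t. ennreal (normal_density (beta2 + beta1 * x n i) sigma_e t))"
    using ev3 by eventually_elim (use y_distr in auto)
  have indE: "\<forall>\<^sub>F n in sequentially. prob_space.indep_vars (M n) (\<lambda>_. borel)
          (\<lambda>j. case j of Inl i \<Rightarrow> y n i | Inr k \<Rightarrow> Z n k) (Inl ` {..<n} \<union> Inr ` {..<4})"
    using ev3 by eventually_elim (use indep in auto)
  define B1 where "B1 = \<bar>beta2\<bar> + \<bar>beta1\<bar> * (\<bar>c_x\<bar> + 1) + 1"
  have pb_yb: "pb M yb"
  proof (rule pb_cong[OF P])
    show "pb M (\<lambda>n w. \<Sum>i<n. (1 / real n) * y n i w)"
    proof (rule pb_wsum[OF P yD sigma_pos indE])
      show "\<forall>\<^sub>F n in sequentially. \<bar>\<Sum>i<n. 1 / real n * (beta2 + beta1 * x n i)\<bar> \<le> B1"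
        using xbB ev3
      proof eventually_elim
        case (elim n)
        have "(\<Sum>i<n. 1 / real n * (beta2 + beta1 * x n i)) = 1 / real n * (\<Sum>i<n. beta2 + beta1 * x n i)"
          by (simp add: sum_distrib_left)
        also have "(\<Sum>i<n. beta2 + beta1 * x n i) = real n * beta2 + beta1 * (\<Sum>i<n. x n i)"
          by (simp add: sum.distrib sum_distrib_left)
        also have "1 / real n * (real n * beta2 + beta1 * (\<Sum>i<n. x n i)) = beta2 + beta1 * xb n"
          using elim(2) by (simp add: xb_def avg_def field_simps)
        also have "\<bar>beta2 + beta1 * xb n\<bar> \<le> \<bar>beta2\<bar> + \<bar>beta1\<bar> * (\<bar>c_x\<bar> + 1)"
        proof -
          have "\<bar>beta1 * xb n\<bar> \<le> \<bar>beta1\<bar> * (\<bar>c_x\<bar> + 1)"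
            using elim(1) by (simp add: abs_mult mult_left_mono)
          then show ?thesis using abs_triangle_ineq[of beta2 "beta1 * xb n"] by linarith
        qed
        finally show ?case unfolding B1_def by linarith
      qed
      show "\<forall>\<^sub>F n in sequentially. (\<Sum>i<n. (1 / real n)\<^sup>2) \<le> B1"
        using ev3
      proof eventually_elim
        case (elim n)
        have "(\<Sum>i<n. (1 / real n)\<^sup>2) = 1 / real n" using elim by (simp add: power2_eq_square)
        also have "\<dots> \<le> 1" using elim by simp
        finally have "(\<Sum>i<n. (1 / real n)\<^sup>2) \<le> 1" .
        moreover have "0 \<le> \<bar>beta2\<bar>" "0 \<le> \<bar>beta1\<bar> * (\<bar>c_x\<bar> + 1)" by simp_all
        ultimately show ?case unfolding B1_def by linarith
      qed
    qed
    show "\<forall>\<^sub>F n in sequentially. \<forall>w\<in>space (M n). yb n w = (\<Sum>i<n. 1 / real n * y n i w)"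
      by (simp add: yb_def avg_def sum_divide_distrib)
  qed
  define B2 where "B2 = \<bar>beta2\<bar> * (\<bar>c_x\<bar> + 1) + \<bar>beta1\<bar> * (\<bar>c_x2\<bar> + 1) + \<bar>c_x2\<bar> + 1"
  have pb_xy: "pb M xy"
  proof (rule pb_cong[OF P])
    show "pb M (\<lambda>n w. \<Sum>i<n. (x n i / real n) * y n i w)"
    proof (rule pb_wsum[OF P yD sigma_pos indE])
      show "\<forall>\<^sub>F n in sequentially. \<bar>\<Sum>i<n. x n i / real n * (beta2 + beta1 * x n i)\<bar> \<le> B2"
        using xbB x2B ev3
      proof eventually_elim
        case (elim n)
        have "(\<Sum>i<n. x n i / real n * (beta2 + beta1 * x n i)) = 1 / real n * (\<Sum>i<n. beta2 * x n i + beta1 * (x n i)\<^sup>2)"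
          by (simp add: sum_distrib_left power2_eq_square algebra_simps)
        also have "(\<Sum>i<n. beta2 * x n i + beta1 * (x n i)\<^sup>2) = beta2 * (\<Sum>i<n. x n i) + beta1 * (\<Sum>i<n. (x n i)\<^sup>2)"
          by (simp add: sum.distrib sum_distrib_left)
        also have "1 / real n * (beta2 * (\<Sum>i<n. x n i) + beta1 * (\<Sum>i<n. (x n i)\<^sup>2)) = beta2 * xb n + beta1 * x2 n"
          using elim(3) by (simp add: xb_def x2_def avg_def field_simps)
        also have "\<bar>beta2 * xb n + beta1 * x2 n\<bar> \<le> \<bar>beta2\<bar> * (\<bar>c_x\<bar> + 1) + \<bar>beta1\<bar> * (\<bar>c_x2\<bar> + 1)"
        proof -
          have "\<bar>beta2 * xb n\<bar> \<le> \<bar>beta2\<bar> * (\<bar>c_x\<bar> + 1)"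
            using elim(1) by (simp add: abs_mult mult_left_mono)
          moreover have "\<bar>beta1 * x2 n\<bar> \<le> \<bar>beta1\<bar> * (\<bar>c_x2\<bar> + 1)"
            using elim(2) by (simp add: abs_mult mult_left_mono)
          ultimately show ?thesis by linarith
        qed
        finally show ?case unfolding B2_def by linarith
      qed
      show "\<forall>\<^sub>F n in sequentially. (\<Sum>i<n. (x n i / real n)\<^sup>2) \<le> B2"
        using x2B ev3
      proof eventually_elim
        case (elim n)
        have "(\<Sum>i<n. (x n i / real n)\<^sup>2) = x2 n / real n"
          using elim(2) by (simp add: x2_def avg_def power_divide sum_divide_distrib[symmetric] power2_eq_square)
        also have "\<dots> \<le> \<bar>x2 n\<bar>"
        proof -
          have n0: "real n > 0" using elim(2) by simp
          have "\<bar>x2 n\<bar> \<le> \<bar>x2 n\<bar> * real n"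
            using mult_left_mono[of 1 "real n" "\<bar>x2 n\<bar>"] elim(2) by simp
          then have "\<bar>x2 n\<bar> / real n \<le> \<bar>x2 n\<bar>" using n0 by (simp add: pos_divide_le_eq)
          moreover have "x2 n / real n \<le> \<bar>x2 n\<bar> / real n" using n0 by (simp add: divide_right_mono)
          ultimately show ?thesis by linarith
        qed
        finally show ?case
        proof -
          assume a: "(\<Sum>i<n. (x n i / real n)\<^sup>2) \<le> \<bar>x2 n\<bar>"
          have "0 \<le> \<bar>beta2\<bar> * (\<bar>c_x\<bar> + 1)" "0 \<le> \<bar>beta1\<bar> * (\<bar>c_x2\<bar> + 1)" by simp_all
          then show ?thesis using a elim(1) unfolding B2_def by linarith
        qed
      qed
    qed
    show "\<forall>\<^sub>F n in sequentially. \<forall>w\<in>space (M n). xy n w = (\<Sum>i<n. x n i / real n * y n i w)"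
      by (simp add: xy_def avg_def sum_divide_distrib)
  qed
  have pb_xb: "pb M (\<lambda>n w. xb n)" using A1(1) unfolding xb_def by (rule pb_det[OF P])
  have pb_x2: "pb M (\<lambda>n w. x2 n)" using A1(2) unfolding x2_def by (rule pb_det[OF P])
  have pb2xb: "pb M (\<lambda>n w. 2 * xb n)"
    using tendsto_mult[OF tendsto_const[of 2] A1(1)] unfolding xb_def by (rule pb_det[OF P])
  define Q where "Q = (\<lambda>n. x2 n - (xb n)\<^sup>2)"
  define Q' where "Q' = (\<lambda>n w. (x2 n + b n * Z n 2 w) - (xb n + a n * Z n 0 w)\<^sup>2)"
  define Pn where "Pn = (\<lambda>n w. xy n w - xb n * yb n w)"
  define P' where "P' = (\<lambda>n w. (xy n w + c n * Z n 3 w) - (xb n + a n * Z n 0 w) * (yb n w + a n * Z n 1 w))"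
  define R where "R = (\<lambda>n w. yb n w * x2 n - xb n * xy n w)"
  define R' where "R' = (\<lambda>n w. (yb n w + a n * Z n 1 w) * (x2 n + b n * Z n 2 w)
                              - (xb n + a n * Z n 0 w) * (xy n w + c n * Z n 3 w))"
  have lQ: "Q \<longlonglongrightarrow> c_x2 - c_x\<^sup>2" unfolding Q_def xb_def x2_def by (intro tendsto_intros A1)
  have q0: "c_x2 - c_x\<^sup>2 \<noteq> 0" using A1(3) by simp
  have pb_P: "pb M Pn" unfolding Pn_def by (rule pb_diff[OF P pb_xy pb_mult[OF P pb_xb pb_yb]])
  have pb_R: "pb M R" unfolding R_def by (rule pb_diff[OF P pb_mult[OF P pb_yb pb_x2] pb_mult[OF P pb_xb pb_xy]])
  have lt0: "(0::nat) < 4" and lt1: "(1::nat) < 4" and lt2: "(2::nat) < 4" and lt3: "(3::nat) < 4" by simp_all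
  have zA: "pz M (\<lambda>n w. (sqrt (real n) * a n) * Z n k w)" if "k < 4" for k by (rule pzN[OF la(2) that])
  have zB: "pz M (\<lambda>n w. (sqrt (real n) * b n) * Z n k w)" if "k < 4" for k by (rule pzN[OF lb(2) that])
  have zC: "pz M (\<lambda>n w. (sqrt (real n) * c n) * Z n k w)" if "k < 4" for k by (rule pzN[OF lc(2) that])
  have za: "pb M (\<lambda>n w. a n * Z n k w)" if "k < 4" for k by (rule pz_imp_pb[OF P pzN[OF la(1) that]])
  have zb: "pb M (\<lambda>n w. b n * Z n k w)" if "k < 4" for k by (rule pz_imp_pb[OF P pzN[OF lb(1) that]])
  have zc: "pb M (\<lambda>n w. c n * Z n k w)" if "k < 4" for k by (rule pz_imp_pb[OF P pzN[OF lc(1) that]])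
  have dQ: "pz M (\<lambda>n w. sqrt (real n) * (Q' n w - Q n))"
    using pz_diff[OF P pz_diff[OF P zB[OF lt2] pb_mult_pz[OF P pb2xb zA[OF lt0]]] pz_mult_pb[OF P zA[OF lt0] za[OF lt0]]]
    by (rule pz_cong[OF P]) (simp add: Q_def Q'_def power2_eq_square algebra_simps)
  have dP: "pz M (\<lambda>n w. sqrt (real n) * (P' n w - Pn n w))"
    using pz_diff[OF P pz_diff[OF P pz_diff[OF P zC[OF lt3] pb_mult_pz[OF P pb_xb zA[OF lt1]]]
        pb_mult_pz[OF P pb_yb zA[OF lt0]]] pz_mult_pb[OF P zA[OF lt0] za[OF lt1]]]
    by (rule pz_cong[OF P]) (simp add: P'_def Pn_def algebra_simps)
  have dR: "pz M (\<lambda>n w. sqrt (real n) * (R' n w - R n w))"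
    using pz_diff[OF P pz_diff[OF P pz_diff[OF P pz_add[OF P pz_add[OF P pb_mult_pz[OF P pb_yb zB[OF lt2]]
          pb_mult_pz[OF P pb_x2 zA[OF lt1]]] pz_mult_pb[OF P zA[OF lt1] zb[OF lt2]]]
          pb_mult_pz[OF P pb_xb zC[OF lt3]]] pb_mult_pz[OF P pb_xy zA[OF lt0]]] pz_mult_pb[OF P zA[OF lt0] zc[OF lt3]]]
    by (rule pz_cong[OF P]) (simp add: R'_def R_def algebra_simps)
  have msr: "\<forall>\<^sub>F n in sequentially. P' n \<in> borel_measurable (M n) \<and> Q' n \<in> borel_measurable (M n)
      \<and> R' n \<in> borel_measurable (M n)"
    using pb_meas[OF pb_yb] pb_meas[OF pb_xy] ev3
  proof eventually_elim
    case (elim n)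
    note [measurable] = elim(1,2) Zm[OF elim(3), of 0] Zm[OF elim(3), of 1] Zm[OF elim(3), of 2] Zm[OF elim(3), of 3]
    have "P' n \<in> borel_measurable (M n)" unfolding P'_def by measurable
    moreover have "Q' n \<in> borel_measurable (M n)" unfolding Q'_def by measurable
    moreover have "R' n \<in> borel_measurable (M n)" unfolding R'_def by measurable
    ultimately show ?case by blast
  qed
  have ratio1: "pz M (\<lambda>n w. sqrt (real n) * (R' n w / Q' n w - R n w / Q n))"
    by (rule pz_ratio[OF P dR dQ pb_R lQ q0]) (use msr in \<open>auto elim: eventually_mono\<close>)
  have ratio2: "pz M (\<lambda>n w. sqrt (real n) * (P' n w / Q' n w - Pn n w / Q n))"
    by (rule pz_ratio[OF P dP dQ pb_P lQ q0]) (use msr in \<open>auto elim: eventually_mono\<close>)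

  define Bad where "Bad = (\<lambda>n. {w \<in> space (M n). \<exists>i<n. y n i w \<notin> {- Delta n..Delta n}})"
  have Bad_sets: "Bad n \<in> sets (M n)" if n: "n > 2" for n
  proof -
    have "Bad n = (\<Union>i\<in>{..<n}. space (M n) - (y n i -` {- Delta n..Delta n} \<inter> space (M n)))"
      by (auto simp: Bad_def)
    also have "\<dots> \<in> sets (M n)"
    proof (intro sets.finite_UN ballI sets.Diff sets.top)
      fix i assume "i \<in> {..<n}"
      then show "y n i -` {- Delta n..Delta n} \<inter> space (M n) \<in> sets (M n)"
        using ym[OF n] by (intro measurable_sets[where A=borel]) auto
    qed simp
    finally show ?thesis .
  qed
  have Egood: "\<forall>\<^sub>F n in sequentially. space (M n) - Bad n \<in> sets (M n) \<and>
      measure (M n) (space (M n) - (space (M n) - Bad n)) \<le> h \<and> 2 < n \<and> Q n \<noteq> 0" if h: "h > 0" for h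
  proof -
    have "\<forall>\<^sub>F n in sequentially. measure (M n) (Bad n) < h"
      unfolding Bad_def by (rule order_tendstoD(2)[OF A4(1) h])
    moreover have "\<forall>\<^sub>F n in sequentially. Q n \<noteq> 0" by (rule tendsto_imp_eventually_ne[OF lQ q0])
    ultimately show ?thesis using ev3
    proof eventually_elim
      case (elim n)
      have "space (M n) - (space (M n) - Bad n) = Bad n" by (auto simp: Bad_def)
      then show ?case using elim Bad_sets[OF elim(3)] by auto
    qed
  qed
  have avg_cong: "avg n f = avg n g" if "\<And>i. i < n \<Longrightarrow> f i = g i" for n f g
  proof -
    have "sum f {..<n} = sum g {..<n}" using that by (intro sum.cong) auto
    then show ?thesis by (simp add: avg_def)
  qed
  have clip_id: "clip l u z = z" if "l \<le> z" "z \<le> u" for l u z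
    using that by (simp add: clip_def)
  have good: "t_xbar n (Delta n) (rho n) (x n) (\<lambda>k. Z n k w) = xb n + a n * Z n 0 w \<and>
      t_ybar n (Delta n) (rho n) (\<lambda>i. y n i w) (\<lambda>k. Z n k w) = yb n w + a n * Z n 1 w \<and>
      t_x2bar n (Delta n) (rho n) (x n) (\<lambda>k. Z n k w) = x2 n + b n * Z n 2 w \<and>
      t_xybar n (Delta n) (rho n) (x n) (\<lambda>i. y n i w) (\<lambda>k. Z n k w) = xy n w + c n * Z n 3 w"
    if n: "n > 2" and w: "w \<in> space (M n) - Bad n" for n w
  proof -
    have hy: "\<bar>y n i w\<bar> \<le> Delta n" if "i < n" for i using w that by (auto simp: Bad_def)
    have hx: "\<bar>x n i\<bar> \<le> Delta n" if "i < n" for i using A4(2)[OF n that] by auto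
    have e1: "avg n (\<lambda>i. clip (- Delta n) (Delta n) (x n i)) = xb n"
      unfolding xb_def
    proof (rule avg_cong)
      fix i assume "i < n"
      then show "clip (- Delta n) (Delta n) (x n i) = x n i"
        using hx[of i] by (intro clip_id) (auto simp: abs_le_iff)
    qed
    have e2: "avg n (\<lambda>i. clip (- Delta n) (Delta n) (y n i w)) = yb n w"
      unfolding yb_def
    proof (rule avg_cong)
      fix i assume "i < n"
      then show "clip (- Delta n) (Delta n) (y n i w) = y n i w"
        using hy[of i] by (intro clip_id) (auto simp: abs_le_iff)
    qed
    have sq: "(x n i)\<^sup>2 \<le> (Delta n)\<^sup>2" if "i < n" for i
      using power_mono[OF hx[OF that], of 2] by simp
    have e3: "avg n (\<lambda>i. clip 0 ((Delta n)\<^sup>2) ((x n i)\<^sup>2)) = x2 n"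
      unfolding x2_def
    proof (rule avg_cong)
      fix i assume "i < n"
      then show "clip 0 ((Delta n)\<^sup>2) ((x n i)\<^sup>2) = (x n i)\<^sup>2"
        using sq[of i] by (intro clip_id) auto
    qed
    have pr: "\<bar>x n i * y n i w\<bar> \<le> (Delta n)\<^sup>2" if "i < n" for i
      using mult_mono[OF hx[OF that] hy[OF that]] Delta_pos[OF n] by (simp add: abs_mult power2_eq_square)
    have e4: "avg n (\<lambda>i. clip (- ((Delta n)\<^sup>2)) ((Delta n)\<^sup>2) (x n i * y n i w)) = xy n w"
      unfolding xy_def
    proof (rule avg_cong)
      fix i assume "i < n"
      then show "clip (- ((Delta n)\<^sup>2)) ((Delta n)\<^sup>2) (x n i * y n i w) = x n i * y n i w"
        using pr[of i] by (intro clip_id) (auto simp: abs_le_iff)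
    qed
    show ?thesis
      by (simp add: t_xbar_def t_ybar_def t_x2bar_def t_xybar_def e1 e2 e3 e4 a_def b_def c_def)
  qed
  show ?thesis
  proof
    show "conv_in_prob M
           (\<lambda>n \<omega>. sqrt (real n) *\<^sub>R
              (tilde_betaN n (Delta n) (rho n) (\<lambda>i. y n i \<omega>) (\<lambda>k. Z n k \<omega>)
               - hat_betaN n (\<lambda>i. y n i \<omega>))) 0"
    proof (rule conv_from_event[OF P zA[OF lt1] pz_det[OF P tendsto_const[of 0]]])
      fix h :: real assume h: "h > 0"
      show "\<exists>E. \<forall>\<^sub>F n in sequentially. E n \<in> sets (M n) \<and> measure (M n) (space (M n) - E n) \<le> h \<and>
         (\<forall>w\<in>E n. fst (sqrt (real n) *\<^sub>R (tilde_betaN n (Delta n) (rho n) (\<lambda>i. y n i w) (\<lambda>k. Z n k w)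
               - hat_betaN n (\<lambda>i. y n i w))) = sqrt (real n) * a n * Z n 1 w \<and>
           snd (sqrt (real n) *\<^sub>R (tilde_betaN n (Delta n) (rho n) (\<lambda>i. y n i w) (\<lambda>k. Z n k w)
               - hat_betaN n (\<lambda>i. y n i w))) = 0)"
      proof (intro exI[of _ "\<lambda>n. space (M n) - Bad n"])
        show "\<forall>\<^sub>F n in sequentially. space (M n) - Bad n \<in> sets (M n) \<and>
          measure (M n) (space (M n) - (space (M n) - Bad n)) \<le> h \<and>
         (\<forall>w\<in>space (M n) - Bad n. fst (sqrt (real n) *\<^sub>R (tilde_betaN n (Delta n) (rho n) (\<lambda>i. y n i w) (\<lambda>k. Z n k w)
               - hat_betaN n (\<lambda>i. y n i w))) = sqrt (real n) * a n * Z n 1 w \<and>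
           snd (sqrt (real n) *\<^sub>R (tilde_betaN n (Delta n) (rho n) (\<lambda>i. y n i w) (\<lambda>k. Z n k w)
               - hat_betaN n (\<lambda>i. y n i w))) = 0)"
          using Egood[OF h]
        proof eventually_elim
          case (elim n)
          have "\<forall>w\<in>space (M n) - Bad n. fst (sqrt (real n) *\<^sub>R (tilde_betaN n (Delta n) (rho n) (\<lambda>i. y n i w) (\<lambda>k. Z n k w)
               - hat_betaN n (\<lambda>i. y n i w))) = sqrt (real n) * a n * Z n 1 w \<and>
           snd (sqrt (real n) *\<^sub>R (tilde_betaN n (Delta n) (rho n) (\<lambda>i. y n i w) (\<lambda>k. Z n k w)
               - hat_betaN n (\<lambda>i. y n i w))) = 0"
          proof
            fix w assume w: "w \<in> space (M n) - Bad n"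
            have "t_ybar n (Delta n) (rho n) (\<lambda>i. y n i w) (\<lambda>k. Z n k w) = yb n w + a n * Z n 1 w"
              using good[OF _ w] elim by auto
            then show "fst (sqrt (real n) *\<^sub>R (tilde_betaN n (Delta n) (rho n) (\<lambda>i. y n i w) (\<lambda>k. Z n k w)
               - hat_betaN n (\<lambda>i. y n i w))) = sqrt (real n) * a n * Z n 1 w \<and>
              snd (sqrt (real n) *\<^sub>R (tilde_betaN n (Delta n) (rho n) (\<lambda>i. y n i w) (\<lambda>k. Z n k w)
               - hat_betaN n (\<lambda>i. y n i w))) = 0"
              by (simp add: tilde_betaN_def hat_betaN_def yb_def)
          qed
          then show ?case using elim by blast
        qed
      qed
    qed
    show "conv_in_prob M
           (\<lambda>n \<omega>. sqrt (real n) *\<^sub>R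
              (tilde_beta n (Delta n) (rho n) (x n) (\<lambda>i. y n i \<omega>) (\<lambda>k. Z n k \<omega>)
               - hat_beta n (x n) (\<lambda>i. y n i \<omega>))) 0"
    proof (rule conv_from_event[OF P ratio1 ratio2])
      fix h :: real assume h: "h > 0"
      show "\<exists>E. \<forall>\<^sub>F n in sequentially. E n \<in> sets (M n) \<and> measure (M n) (space (M n) - E n) \<le> h \<and>
         (\<forall>w\<in>E n. fst (sqrt (real n) *\<^sub>R (tilde_beta n (Delta n) (rho n) (x n) (\<lambda>i. y n i w) (\<lambda>k. Z n k w)
               - hat_beta n (x n) (\<lambda>i. y n i w))) = sqrt (real n) * (R' n w / Q' n w - R n w / Q n) \<and>
           snd (sqrt (real n) *\<^sub>R (tilde_beta n (Delta n) (rho n) (x n) (\<lambda>i. y n i w) (\<lambda>k. Z n k w)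
               - hat_beta n (x n) (\<lambda>i. y n i w))) = sqrt (real n) * (P' n w / Q' n w - Pn n w / Q n))"
      proof (intro exI[of _ "\<lambda>n. space (M n) - Bad n"])
        show "\<forall>\<^sub>F n in sequentially. space (M n) - Bad n \<in> sets (M n) \<and>
          measure (M n) (space (M n) - (space (M n) - Bad n)) \<le> h \<and>
         (\<forall>w\<in>space (M n) - Bad n. fst (sqrt (real n) *\<^sub>R (tilde_beta n (Delta n) (rho n) (x n) (\<lambda>i. y n i w) (\<lambda>k. Z n k w)
               - hat_beta n (x n) (\<lambda>i. y n i w))) = sqrt (real n) * (R' n w / Q' n w - R n w / Q n) \<and>
           snd (sqrt (real n) *\<^sub>R (tilde_beta n (Delta n) (rho n) (x n) (\<lambda>i. y n i w) (\<lambda>k. Z n k w)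
               - hat_beta n (x n) (\<lambda>i. y n i w))) = sqrt (real n) * (P' n w / Q' n w - Pn n w / Q n))"
          using Egood[OF h]
        proof eventually_elim
          case (elim n)
          have "\<forall>w\<in>space (M n) - Bad n. fst (sqrt (real n) *\<^sub>R (tilde_beta n (Delta n) (rho n) (x n) (\<lambda>i. y n i w) (\<lambda>k. Z n k w)
               - hat_beta n (x n) (\<lambda>i. y n i w))) = sqrt (real n) * (R' n w / Q' n w - R n w / Q n) \<and>
           snd (sqrt (real n) *\<^sub>R (tilde_beta n (Delta n) (rho n) (x n) (\<lambda>i. y n i w) (\<lambda>k. Z n k w)
               - hat_beta n (x n) (\<lambda>i. y n i w))) = sqrt (real n) * (P' n w / Q' n w - Pn n w / Q n)"
          proof
            fix w assume w: "w \<in> space (M n) - Bad n"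
            have g: "t_xbar n (Delta n) (rho n) (x n) (\<lambda>k. Z n k w) = xb n + a n * Z n 0 w"
              "t_ybar n (Delta n) (rho n) (\<lambda>i. y n i w) (\<lambda>k. Z n k w) = yb n w + a n * Z n 1 w"
              "t_x2bar n (Delta n) (rho n) (x n) (\<lambda>k. Z n k w) = x2 n + b n * Z n 2 w"
              "t_xybar n (Delta n) (rho n) (x n) (\<lambda>i. y n i w) (\<lambda>k. Z n k w) = xy n w + c n * Z n 3 w"
              using good[OF _ w] elim by auto
            have tb: "tilde_beta n (Delta n) (rho n) (x n) (\<lambda>i. y n i w) (\<lambda>k. Z n k w) = (R' n w / Q' n w, P' n w / Q' n w)"
              by (simp add: tilde_beta_def Let_def g R'_def P'_def Q'_def)
            have hb1: "hat_beta1 n (x n) (\<lambda>i. y n i w) = Pn n w / Q n"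
              by (simp add: hat_beta1_def Pn_def Q_def xy_def xb_def yb_def x2_def)
            have hQ: "Q n \<noteq> 0" using elim by auto
            have "yb n w - Pn n w / Q n * xb n = (yb n w * Q n - Pn n w * xb n) / Q n"
              using hQ by (simp add: field_simps)
            also have "yb n w * Q n - Pn n w * xb n = R n w"
              by (simp add: Q_def Pn_def R_def algebra_simps power2_eq_square)
            finally have hb: "hat_beta n (x n) (\<lambda>i. y n i w) = (R n w / Q n, Pn n w / Q n)"
              by (simp add: hat_beta_def hb1 yb_def xb_def)
            show "fst (sqrt (real n) *\<^sub>R (tilde_beta n (Delta n) (rho n) (x n) (\<lambda>i. y n i w) (\<lambda>k. Z n k w)
               - hat_beta n (x n) (\<lambda>i. y n i w))) = sqrt (real n) * (R' n w / Q' n w - R n w / Q n) \<and>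
              snd (sqrt (real n) *\<^sub>R (tilde_beta n (Delta n) (rho n) (x n) (\<lambda>i. y n i w) (\<lambda>k. Z n k w)
               - hat_beta n (x n) (\<lambda>i. y n i w))) = sqrt (real n) * (P' n w / Q' n w - Pn n w / Q n)"
              by (simp add: tb hb)
          qed
          then show ?case using elim by blast
        qed
      qed
    qed
  qed

qed

end
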